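(* Let $q$ be a power of $2$ and $r\in[q-1]$. The minimum Hamming distance $d$ of the QLRS code, viewed as the block code $\{(f(\boldsymbol v))_{\boldsymbol v\in\mathbb F_q^2}: f\in\mathcal C_q(\Phi,q-r)\}\subseteq\mathbb F_q^{q^2}$, satisfies $qr+1\le d\le qr+q$.
   Context: $\Phi=\{\alpha x^2+\beta x+\gamma:\alpha,\beta,\gamma\in\mathbb F_q\}$. For $f\in\mathbb F_q[x,y]$ and $\phi\in\Phi$, $f|_\phi$ is the reduction of $f(x,\phi(x))$ modulo $x^q-x$. $\mathcal C_q(\Phi,q-r)$ is the $\mathbb F_q$-space of $f\in\mathbb F_q[x,y]$ with $\deg_xf,\deg_yf\le q-1$ and $\deg f|_\phi<q-r$ for all $\phi\in\Phi$. The minimum Hamming distance is the minimum number of nonzero coordinates of a nonzero evaluation vector. *)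

theory Defs
  imports "HOL-Computational_Algebra.Polynomial" "HOL-Library.Cardinality"
begin

text \<open>Bivariate polynomials over F_q are represented as elements of F_q[x][y],
  i.e. polynomials in y whose coefficients are polynomials in x.\<close>

definition deg_x :: "'a::zero poly poly \<Rightarrow> nat" where
  "deg_x f = Max (insert 0 {degree (coeff f i) | i. i \<le> degree f})"

abbreviation deg_y :: "'a::zero poly poly \<Rightarrow> nat" where
  "deg_y f \<equiv> degree f"

definition eval2 :: "'a::comm_semiring_0 poly poly \<Rightarrow> 'a \<Rightarrow> 'a \<Rightarrow> 'a" where
  "eval2 f a b = poly (map_poly (\<lambda>p. poly p a) f) b"

definition Phi :: "'a::zero poly set" where
  "Phi = {[:\<gamma>, \<beta>, \<alpha>:] | \<alpha> \<beta> \<gamma>. True}"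

definition restrict :: "nat \<Rightarrow> 'a::field poly poly \<Rightarrow> 'a poly \<Rightarrow> 'a poly" where
  "restrict q f \<phi> = poly f \<phi> mod (monom 1 q - monom 1 1)"

definition QLRS :: "nat \<Rightarrow> nat \<Rightarrow> 'a::field poly poly set" where
  "QLRS q k = {f. deg_x f \<le> q - 1 \<and> deg_y f \<le> q - 1 \<and>
               (\<forall>\<phi>\<in>Phi. degree (restrict q f \<phi>) < k)}"

definition evec :: "'a::comm_semiring_0 poly poly \<Rightarrow> ('a \<times> 'a \<Rightarrow> 'a)" where
  "evec f = (\<lambda>v. eval2 f (fst v) (snd v))"

definition hamming_weight :: "('b \<Rightarrow> 'a::zero) \<Rightarrow> nat" where
  "hamming_weight w = card {v. w v \<noteq> 0}"

definition min_distance :: "('b \<Rightarrow> 'a::zero) set \<Rightarrow> nat" where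
  "min_distance C = Min {hamming_weight w | w. w \<in> C \<and> w \<noteq> (\<lambda>_. 0)}"

end

theory Submission
  imports Defs
begin


lemma fermat_field:
  fixes a :: "'a::{field,finite}"
  shows "a ^ CARD('a) = a"
proof (cases "a = 0")
  case True
  have "CARD('a) > 0" by simp
  then show ?thesis using True by (simp add: power_0_left)
next
  case False
  let ?U = "UNIV - {0::'a}"
  have bij: "bij_betw (\<lambda>x. a * x) ?U ?U"
  proof -
    have "x \<in> (\<lambda>x. a * x) ` ?U" if "x \<noteq> 0" for x
      using False that by (intro image_eqI[of _ _ "x / a"]) auto
    then show ?thesis unfolding bij_betw_def inj_on_def using False by auto
  qed
  have "prod (\<lambda>x. x) ?U = prod (\<lambda>x. a * x) ?U"
    using prod.reindex_bij_betw[OF bij, of "\<lambda>x. x"] by simp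
  also have "\<dots> = a ^ card ?U * prod (\<lambda>x. x) ?U"
    by (simp add: prod.distrib)
  finally have "a ^ card ?U = 1"
    by (simp add: prod_zero_iff)
  moreover have "card ?U = CARD('a) - 1" by (simp add: card_Diff_singleton)
  moreover have "CARD('a) > 0" by simp
  ultimately show ?thesis
    by (metis Suc_diff_1 mult.right_neutral power_Suc)
qed

lemma poly_poly_eval2:
  fixes f :: "'a::comm_ring_1 poly poly"
  shows "poly (poly f \<phi>) a = eval2 f a (poly \<phi> a)"
  unfolding eval2_def
  by (induction f) (simp_all add: map_poly_pCons)

lemma poly_restrict:
  fixes f :: "'a::{field,finite} poly poly"
  shows "poly (restrict CARD('a) f \<phi>) a = eval2 f a (poly \<phi> a)"
proof -
  let ?m = "monom 1 CARD('a) - monom 1 1 :: 'a poly"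
  have m0: "poly ?m a = 0" by (simp add: poly_monom fermat_field)
  have "poly (poly f \<phi>) a = poly (poly f \<phi> div ?m * ?m + poly f \<phi> mod ?m) a"
    by (metis div_mult_mod_eq)
  also have "\<dots> = poly (poly f \<phi> mod ?m) a" using m0 by (simp only: poly_add poly_mult) simp
  finally show ?thesis unfolding restrict_def using poly_poly_eval2 by metis
qed

lemma weight_lower:
  fixes f :: "'a::{field,finite} poly poly"
  assumes k: "\<forall>\<phi>\<in>Phi. degree (restrict CARD('a) f \<phi>) < CARD('a) - r"
    and nz: "evec f \<noteq> (\<lambda>_. 0)"
  shows "CARD('a) * r + 1 \<le> hamming_weight (evec f)"
proof -
  let ?q = "CARD('a)"
  obtain a0 b0 where p: "eval2 f a0 b0 \<noteq> 0"
    using nz unfolding evec_def by fastforce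
  define ph where "ph \<alpha> \<beta> = [: b0 - \<beta>*a0 - \<alpha>*a0^2, \<beta>, \<alpha> :]" for \<alpha> \<beta> :: 'a
  have poly_ph: "poly (ph \<alpha> \<beta>) x = b0 + \<beta>*(x-a0) + \<alpha>*(x^2 - a0^2)" for \<alpha> \<beta> x
    unfolding ph_def by (simp add: algebra_simps power2_eq_square)
  define N where "N \<alpha> \<beta> = {x. x \<noteq> a0 \<and> eval2 f x (poly (ph \<alpha> \<beta>) x) \<noteq> 0}" for \<alpha> \<beta>
  have Ncard: "r \<le> card (N \<alpha> \<beta>)" for \<alpha> \<beta>
  proof -
    define \<rho> where "\<rho> = restrict ?q f (ph \<alpha> \<beta>)"
    have "ph \<alpha> \<beta> \<in> Phi" unfolding Phi_def ph_def by blast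
    then have d: "degree \<rho> < ?q - r" using k \<rho>_def by blast
    have pr: "poly \<rho> x = eval2 f x (poly (ph \<alpha> \<beta>) x)" for x
      unfolding \<rho>_def by (rule poly_restrict)
    have "poly \<rho> a0 \<noteq> 0" using p pr[of a0] poly_ph[of \<alpha> \<beta> a0] by simp
    then have "\<rho> \<noteq> 0" by auto
    then have z: "card {x. poly \<rho> x = 0} \<le> degree \<rho>" by (rule card_poly_roots_bound)
    have "UNIV = {x. poly \<rho> x = 0} \<union> insert a0 (N \<alpha> \<beta>)"
      unfolding N_def pr by auto
    then have "?q \<le> card {x. poly \<rho> x = 0} + card (insert a0 (N \<alpha> \<beta>))"
      by (metis card_Un_le)
    also have "\<dots> \<le> card {x. poly \<rho> x = 0} + card (N \<alpha> \<beta>) + 1"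
      using card_insert_le_m1[of 1 "N \<alpha> \<beta>" a0] by (simp add: card_insert_if)
    finally show ?thesis using z d by linarith
  qed
  define T where "T = Sigma (UNIV :: ('a \<times> 'a) set) (\<lambda>(\<alpha>,\<beta>). N \<alpha> \<beta>)"
  define S' where "S' = {v. evec f v \<noteq> 0 \<and> fst v \<noteq> a0}"
  have "card T = (\<Sum>ab\<in>UNIV. card ((\<lambda>(\<alpha>,\<beta>). N \<alpha> \<beta>) ab))"
    unfolding T_def by (rule card_SigmaI) auto
  also have "\<dots> \<ge> (\<Sum>ab\<in>(UNIV :: ('a \<times> 'a) set). r)"
    by (intro sum_mono) (auto simp: Ncard)
  finally have T1: "?q * ?q * r \<le> card T" by (simp add: card_cartesian_product[of UNIV UNIV, simplified])
  define g where "g = (\<lambda>((\<alpha>::'a,\<beta>::'a),x::'a). ((x, poly (ph \<alpha> \<beta>) x), \<alpha>))"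
  have inj: "inj_on g T"
  proof (rule inj_onI)
    fix u v assume u: "u \<in> T" and v: "v \<in> T" and e: "g u = g v"
    obtain \<alpha> \<beta> x where uu: "u = ((\<alpha>,\<beta>),x)" by (metis prod.exhaust)
    obtain \<alpha>' \<beta>' x' where vv: "v = ((\<alpha>',\<beta>'),x')" by (metis prod.exhaust)
    have xa: "x \<noteq> a0" using u uu unfolding T_def N_def by auto
    from e have ee: "x = x'" "\<alpha> = \<alpha>'" "poly (ph \<alpha> \<beta>) x = poly (ph \<alpha>' \<beta>') x'"
      unfolding g_def uu vv by auto
    then have "\<beta> * (x - a0) = \<beta>' * (x - a0)" using poly_ph by simp
    then have "\<beta> = \<beta>'" using xa by simp
    then show "u = v" using ee uu vv by simp
  qed
  have img: "g ` T \<subseteq> S' \<times> UNIV"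
    unfolding g_def T_def N_def S'_def evec_def by auto
  have "card T \<le> card (S' \<times> (UNIV :: 'a set))"
    using card_inj_on_le[OF inj img] by simp
  also have "\<dots> = card S' * ?q" by (simp add: card_cartesian_product)
  finally have "?q * ?q * r \<le> card S' * ?q" using T1 by linarith
  then have S'c: "?q * r \<le> card S'" by (simp add: mult.commute)
  have sub: "insert (a0,b0) S' \<subseteq> {v. evec f v \<noteq> 0}"
    unfolding S'_def evec_def using p by auto
  have "card (insert (a0,b0) S') = card S' + 1"
    unfolding S'_def by (simp add: card_insert_if)
  moreover have "card (insert (a0,b0) S') \<le> card {v. evec f v \<noteq> 0}"
    using sub by (intro card_mono) auto
  ultimately show ?thesis unfolding hamming_weight_def using S'c by linarith
qed

lemma witness:
  assumes r: "r \<le> CARD('a::{field,finite}) - 1"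
  shows "\<exists>f :: 'a poly poly. f \<in> QLRS CARD('a) (CARD('a) - r) \<and> evec f \<noteq> (\<lambda>_. 0)
            \<and> hamming_weight (evec f) = CARD('a) * r + CARD('a)"
proof -
  let ?q = "CARD('a)"
  have q2: "?q \<ge> 2"
  proof -
    have "{0::'a, 1} \<subseteq> UNIV" by simp
    then have "card {0::'a,1} \<le> ?q" by (intro card_mono) auto
    then show ?thesis by simp
  qed
  obtain A :: "'a set" where A: "card A = ?q - r - 1" "finite A"
    using obtain_subset_with_card_n[of "?q - r - 1" "UNIV :: 'a set"] by auto
  define g where "g = (\<Prod>a\<in>A. [:-a, 1:])"
  have dg: "degree g = ?q - r - 1"
    unfolding g_def using A by (subst degree_prod_sum_eq) auto
  have pg: "poly g x = 0 \<longleftrightarrow> x \<in> A" for x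
    unfolding g_def poly_prod using A by auto
  define f where "f = [: g :]"
  have ev: "evec f v = poly g (fst v)" for v
    unfolding f_def evec_def eval2_def by (simp add: map_poly_pCons)
  have dm: "degree (monom 1 ?q - monom 1 1 :: 'a poly) = ?q"
    using q2 unfolding diff_conv_add_uminus by (subst degree_add_eq_left) (auto simp: degree_monom_eq)
  have "f \<in> QLRS ?q (?q - r)"
    unfolding QLRS_def
  proof (intro CollectI conjI ballI)
    have "{degree (coeff f i) |i. i \<le> degree f} = {degree g}"
      unfolding f_def by auto
    then show "deg_x f \<le> ?q - 1" unfolding deg_x_def using dg by simp
    show "deg_y f \<le> ?q - 1" unfolding f_def by simp
    fix \<phi> :: "'a poly"
    have "restrict ?q f \<phi> = g"
      unfolding restrict_def f_def using dg dm r q2 by (simp add: mod_poly_less)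
    then show "degree (restrict ?q f \<phi>) < ?q - r" using dg r q2 by simp
  qed
  moreover have W: "{v. evec f v \<noteq> 0} = (UNIV - A) \<times> UNIV"
    using ev pg by auto
  have "card (UNIV - A) = r + 1"
    using A r q2 by (simp add: card_Diff_subset)
  then have "hamming_weight (evec f) = ?q * r + ?q"
    unfolding hamming_weight_def W by (simp add: card_cartesian_product)
  moreover have "evec f \<noteq> (\<lambda>_. 0)"
  proof
    assume "evec f = (\<lambda>_. 0)"
    then have "{v. evec f v \<noteq> 0} = {}" by simp
    then show False using W \<open>card (UNIV - A) = r + 1\<close> by (metis Diff_eq_empty_iff Sigma_empty1 UNIV_I card.empty empty_subsetI nat.simps(3) Suc_eq_plus1 subsetI Times_empty)
  qed
  ultimately show ?thesis by blast
qed


theorem mainTheorem6: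
  fixes r :: nat
    and C :: "('a::{field,finite} \<times> 'a \<Rightarrow> 'a) set"
  assumes "\<exists>m. CARD('a) = 2 ^ m"
    and "1 \<le> r" and "r \<le> CARD('a) - 1"
    and "C = evec ` (QLRS CARD('a) (CARD('a) - r))"
  shows "CARD('a) * r + 1 \<le> min_distance C \<and> min_distance C \<le> CARD('a) * r + CARD('a)"
proof -
  let ?W = "{hamming_weight w | w. w \<in> C \<and> w \<noteq> (\<lambda>_. 0)}"
  have fin: "finite ?W"
    by (rule finite_subset[of _ "hamming_weight ` (UNIV :: ('a \<times> 'a \<Rightarrow> 'a) set)"]) auto
  obtain f :: "'a poly poly" where f: "f \<in> QLRS CARD('a) (CARD('a) - r)" "evec f \<noteq> (\<lambda>_. 0)"
     "hamming_weight (evec f) = CARD('a) * r + CARD('a)"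
    using witness[OF assms(3)] by blast
  have inW: "CARD('a) * r + CARD('a) \<in> ?W" 
  proof -
    have "evec f \<in> C" using f(1) assms(4) by blast
    then show ?thesis using f(2) f(3)[symmetric] by blast
  qed
  have lb: "\<forall>x\<in>?W. CARD('a) * r + 1 \<le> x"
  proof
    fix x assume "x \<in> ?W"
    then obtain g :: "'a poly poly" where g: "g \<in> QLRS CARD('a) (CARD('a) - r)" "evec g \<noteq> (\<lambda>_. 0)"
      "x = hamming_weight (evec g)"
    proof -
      from \<open>x \<in> ?W\<close> obtain w where "x = hamming_weight w" "w \<in> C" "w \<noteq> (\<lambda>_. 0)" by blast
      moreover from \<open>w \<in> C\<close> assms(4) obtain g :: "'a poly poly" where "g \<in> QLRS CARD('a) (CARD('a) - r)" "w = evec g" by blast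
      ultimately show ?thesis using that by metis
    qed
    show "CARD('a) * r + 1 \<le> x"
      using weight_lower[of g r] g unfolding QLRS_def by blast
  qed
  have ne: "?W \<noteq> {}" using inW by blast
  have "CARD('a) * r + 1 \<le> Min ?W" using Min_ge_iff[OF fin ne] lb by blast
  moreover have "Min ?W \<le> CARD('a) * r + CARD('a)" using Min_le[OF fin inW] .
  ultimately show ?thesis unfolding min_distance_def by blast
qed

end
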